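(* Let $\mathbf C$ be a finite dimensional clone $\tau$-algebra. Then: (i) the $\rho_{\mathbf C}$-algebra $\mathbf R_{\mathbf C}$ is isomorphic to the free $\rho_{\mathbf C}$-algebra over a countably infinite set of generators in the variety $\mathrm{Var}(\mathbf R_{\mathbf C})$ generated by $\mathbf R_{\mathbf C}$; (ii) the clone $\rho_{\mathbf C}$-algebra $\overline{\mathbf R}_{\mathbf C}$ is isomorphic to the clone $\mathrm{Var}(\mathbf R_{\mathbf C})$-algebra.
   Context: A clone $\tau$-algebra is an algebra $\mathbf C=(C,\sigma^{\mathbf C}\ (\sigma\in\tau),q_n^{\mathbf C}\ (n\ge0),\mathsf e_i^{\mathbf C}\ (i\ge1))$ with $\mathsf e_i$ nullary, $q_n$ of arity $n+1$, satisfying: (C1) $q_n(\mathsf e_i,x_1,\dots,x_n)=x_i$ ($1\le i\le n$); (C2) $q_n(\mathsf e_j,x_1,\dots,x_n)=\mathsf e_j$ ($j>n$); (C3) $q_n(x,\mathsf e_1,\dots,\mathsf e_n)=x$; (C4) $q_k(x,y_1,\dots,y_k)=q_n(x,y_1,\dots,y_k,\mathsf e_{k+1},\dots,\mathsf e_n)$ ($n>k$); (C5) $q_n(q_n(x,\mathbf y),\mathbf z)=q_n(x,q_n(y_1,\mathbf z),\dots,q_n(y_n,\mathbf z))$; (C6) $q_n(\sigma(x_1,\dots,x_k),\mathbf y)=\sigma(q_n(x_1,\mathbf y),\dots,q_n(x_k,\mathbf y))$ for $\sigma\in\tau$ of arity $k$. An element $a$ is independent of $\mathsf e_n$ if $q_n(a,\mathsf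 e_1,\dots,\mathsf e_{n-1},\mathsf e_{n+1})=a$; its dimension is the largest $n$ on which it depends ($0$ if none, infinite if infinitely many); $\mathbf C$ is finite dimensional if all elements have finite dimension. A function $f:C^k\to C$ is $\mathbf C$-representable if $f(\mathsf e_1,\dots,\mathsf e_k)$ has dimension $\le k$ and $f(a_1,\dots,a_k)=q_k(f(\mathsf e_1,\dots,\mathsf e_k),a_1,\dots,a_k)$ for all $a_i\in C$; $R_{\mathbf C}$ is the set of $\mathbf C$-representable functions. The type $\rho_{\mathbf C}$ has one operation symbol $\overline f$ of arity $k$ for each $k$-ary $f\in R_{\mathbf C}$; $\mathbf R_{\mathbf C}=(C,f)_{f\in R_{\mathbf C}}$ is the $\rho_{\mathbf C}$-algebra interpreting $\overline f$ as $f$; $\overline{\mathbf R}_{\mathbf C}=(\mathbf R_{\mathbf C},q_n^{\mathbf C},\mathsf e_i^{\mathbf C})$ is a clone $\rho_{\mathbf C}$-algebra. For a variety $\mathcal V$ of $\nu$-algebras with free algebra $\mathbf F_{\mathcal V}$ over the countable set $I=\{v_1,v_2,\dots\}$ of free generators, the clone $\mathcal V$-algebra is $(\mathbf F_{\mathcal V},q_n^{\mathbf F},\mathsf e_i^{\mathbf F})$ with $\mathsf e_i^{\mathbf F}=v_i$ and $q_n^{\mathbf F}(a,b_1,\dots,b_n)=s(a)$, where $s$ is the unique endomorphism of $\mathbf F_{\mathcal V}$ with $s(v_i)=b_i$ for $i\le n$ and $s(v_i)=v_i$ for $i>n$. *)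

theory Defs
  imports Main
begin

text \<open>The carrier C of the clone tau-algebra is the whole type 'a.
  A tau-signature is given by a type 's of operation symbols with arity function ar;
  sig interprets the symbols (on argument lists of the right length).
  q n a bs is q_n(a, b_1, ..., b_n) (with length bs = n), e i is e_i (i >= 1; e 0 unused).\<close>

definition es :: "(nat \<Rightarrow> 'a) \<Rightarrow> nat \<Rightarrow> 'a list" where
  "es e n = map e [1..<n+1]"

definition clone_alg ::
  "('s \<Rightarrow> nat) \<Rightarrow> ('s \<Rightarrow> 'a list \<Rightarrow> 'a) \<Rightarrow> (nat \<Rightarrow> 'a \<Rightarrow> 'a list \<Rightarrow> 'a) \<Rightarrow> (nat \<Rightarrow> 'a) \<Rightarrow> bool"
where
  "clone_alg ar sig q e \<longleftrightarrow>
     (\<forall>n xs i. length xs = n \<longrightarrow> 1 \<le> i \<longrightarrow> i \<le> n \<longrightarrow> q n (e i) xs = xs ! (i - 1)) \<and>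
     (\<forall>n xs j. length xs = n \<longrightarrow> n < j \<longrightarrow> q n (e j) xs = e j) \<and>
     (\<forall>n x. q n x (es e n) = x) \<and>
     (\<forall>k n x ys. length ys = k \<longrightarrow> k < n \<longrightarrow> q k x ys = q n x (ys @ map e [k+1..<n+1])) \<and>
     (\<forall>n x ys zs. length ys = n \<longrightarrow> length zs = n \<longrightarrow>
        q n (q n x ys) zs = q n x (map (\<lambda>y. q n y zs) ys)) \<and>
     (\<forall>n \<sigma> xs ys. length xs = ar \<sigma> \<longrightarrow> length ys = n \<longrightarrow>
        q n (sig \<sigma> xs) ys = sig \<sigma> (map (\<lambda>x. q n x ys) xs))"

definition independent :: "(nat \<Rightarrow> 'a \<Rightarrow> 'a list \<Rightarrow> 'a) \<Rightarrow> (nat \<Rightarrow> 'a) \<Rightarrow> 'a \<Rightarrow> nat \<Rightarrow> bool" where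
  "independent q e a n \<longleftrightarrow> q n a (map e [1..<n] @ [e (n+1)]) = a"

definition dim_le :: "(nat \<Rightarrow> 'a \<Rightarrow> 'a list \<Rightarrow> 'a) \<Rightarrow> (nat \<Rightarrow> 'a) \<Rightarrow> 'a \<Rightarrow> nat \<Rightarrow> bool" where
  "dim_le q e a k \<longleftrightarrow> (\<forall>n>k. independent q e a n)"

definition finite_dim :: "(nat \<Rightarrow> 'a \<Rightarrow> 'a list \<Rightarrow> 'a) \<Rightarrow> (nat \<Rightarrow> 'a) \<Rightarrow> bool" where
  "finite_dim q e \<longleftrightarrow> (\<forall>a. \<exists>k. dim_le q e a k)"

text \<open>A k-ary function C^k -> C is represented by f :: 'a list => 'a, extensionally
  normalised to undefined on lists of length different from k, so that each
  k-ary function corresponds to exactly one such f.\<close>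
definition representable :: "(nat \<Rightarrow> 'a \<Rightarrow> 'a list \<Rightarrow> 'a) \<Rightarrow> (nat \<Rightarrow> 'a) \<Rightarrow> nat \<Rightarrow> ('a list \<Rightarrow> 'a) \<Rightarrow> bool" where
  "representable q e k f \<longleftrightarrow>
     dim_le q e (f (es e k)) k \<and>
     (\<forall>xs. length xs = k \<longrightarrow> f xs = q k (f (es e k)) xs) \<and>
     (\<forall>xs. length xs \<noteq> k \<longrightarrow> f xs = undefined)"

text \<open>The type rho_C: one symbol (k, f) of arity k for every k-ary representable f,
  interpreted in R_C as f itself.\<close>
definition rho_syms :: "(nat \<Rightarrow> 'a \<Rightarrow> 'a list \<Rightarrow> 'a) \<Rightarrow> (nat \<Rightarrow> 'a) \<Rightarrow> (nat \<times> ('a list \<Rightarrow> 'a)) set" where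
  "rho_syms q e = {(k, f). representable q e k f}"

datatype 'f trm = Var nat | App 'f "'f trm list"

fun wf_trm :: "'f set \<Rightarrow> ('f \<Rightarrow> nat) \<Rightarrow> 'f trm \<Rightarrow> bool" where
  "wf_trm S ar (Var i) = True"
| "wf_trm S ar (App f ts) = (f \<in> S \<and> length ts = ar f \<and> (\<forall>t\<in>set ts. wf_trm S ar t))"

fun eval :: "('f \<Rightarrow> 'a list \<Rightarrow> 'a) \<Rightarrow> (nat \<Rightarrow> 'a) \<Rightarrow> 'f trm \<Rightarrow> 'a" where
  "eval I \<rho> (Var i) = \<rho> i"
| "eval I \<rho> (App f ts) = I f (map (eval I \<rho>) ts)"

fun subst :: "(nat \<Rightarrow> 'f trm) \<Rightarrow> 'f trm \<Rightarrow> 'f trm" where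
  "subst s (Var i) = s i"
| "subst s (App f ts) = App f (map (subst s) ts)"

text \<open>rho_C-terms over the countably infinite set of variables I = {v_1, v_2, ...};
  the variable v_i is represented as Var (i - 1).\<close>
definition rho_terms :: "(nat \<Rightarrow> 'a \<Rightarrow> 'a list \<Rightarrow> 'a) \<Rightarrow> (nat \<Rightarrow> 'a) \<Rightarrow> (nat \<times> ('a list \<Rightarrow> 'a)) trm set" where
  "rho_terms q e = {t. wf_trm (rho_syms q e) fst t}"

definition R_identity :: "(nat \<times> ('a list \<Rightarrow> 'a)) trm \<Rightarrow> (nat \<times> ('a list \<Rightarrow> 'a)) trm \<Rightarrow> bool" where
  "R_identity s t \<longleftrightarrow> (\<forall>\<rho>. eval snd \<rho> s = eval snd \<rho> t)"

text \<open>The free algebra F_V over I in V = Var(R_C) is the term algebra over I modulo the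
  fully invariant congruence of identities of R_C (= identities of V).
  free_iso q e h: h is a homomorphism of rho_C-algebras from the term algebra onto R_C whose
  kernel is exactly that congruence; equivalently h induces an isomorphism F_V \<cong> R_C.\<close>
definition free_iso :: "(nat \<Rightarrow> 'a \<Rightarrow> 'a list \<Rightarrow> 'a) \<Rightarrow> (nat \<Rightarrow> 'a) \<Rightarrow>
    ((nat \<times> ('a list \<Rightarrow> 'a)) trm \<Rightarrow> 'a) \<Rightarrow> bool" where
  "free_iso q e h \<longleftrightarrow>
     h ` rho_terms q e = UNIV \<and>
     (\<forall>s\<in>rho_terms q e. \<forall>t\<in>rho_terms q e. h s = h t \<longleftrightarrow> R_identity s t) \<and>
     (\<forall>k f ts. (k, f) \<in> rho_syms q e \<longrightarrow> length ts = k \<longrightarrow> set ts \<subseteq> rho_terms q e \<longrightarrow>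
        h (App (k, f) ts) = f (map h ts))"

text \<open>Substitution v_i := b_i for i <= n, v_i := v_i for i > n (variables shifted as above).\<close>
definition sub_n :: "'f trm list \<Rightarrow> nat \<Rightarrow> 'f trm" where
  "sub_n bs j = (if j < length bs then bs ! j else Var j)"

text \<open>Additionally h maps the clone operations of the clone V-algebra to those of
  the clone algebra R-bar_C: e_i^F = v_i and q_n^F(a, b_1..b_n) = s(a).\<close>
definition clone_iso :: "(nat \<Rightarrow> 'a \<Rightarrow> 'a list \<Rightarrow> 'a) \<Rightarrow> (nat \<Rightarrow> 'a) \<Rightarrow>
    ((nat \<times> ('a list \<Rightarrow> 'a)) trm \<Rightarrow> 'a) \<Rightarrow> bool" where
  "clone_iso q e h \<longleftrightarrow>
     (\<forall>i\<ge>1. h (Var (i - 1)) = e i) \<and>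
     (\<forall>n t bs. t \<in> rho_terms q e \<longrightarrow> length bs = n \<longrightarrow> set bs \<subseteq> rho_terms q e \<longrightarrow>
        h (subst (sub_n bs) t) = q n (h t) (map h bs))"

end

theory Submission
  imports Defs
begin

declare upt_Suc[simp del]

fun bnd :: "(nat \<times> 'f) trm \<Rightarrow> nat" where
  "bnd (Var i) = Suc i"
| "bnd (App f ts) = max (fst f) (sum_list (map bnd ts))"

lemma subst_eval: "eval I \<rho> (subst s t) = eval I (\<lambda>i. eval I \<rho> (s i)) t"
  by (induction t) (auto cong: map_cong)

context
  fixes ar :: "'s \<Rightarrow> nat" and sig :: "'s \<Rightarrow> 'a list \<Rightarrow> 'a"
    and q :: "nat \<Rightarrow> 'a \<Rightarrow> 'a list \<Rightarrow> 'a" and e :: "nat \<Rightarrow> 'a"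
  assumes CA: "clone_alg ar sig q e"
begin

lemmas CA' = CA[unfolded clone_alg_def]
lemmas CA1 = CA'[THEN conjunct1]
lemmas CA2 = CA'[THEN conjunct2, THEN conjunct1]
lemmas CA3 = CA'[THEN conjunct2, THEN conjunct2, THEN conjunct1]
lemmas CA4 = CA'[THEN conjunct2, THEN conjunct2, THEN conjunct2, THEN conjunct1]
lemmas CA5 = CA'[THEN conjunct2, THEN conjunct2, THEN conjunct2, THEN conjunct2, THEN conjunct1]
lemmas CAs = CA1 CA2 CA3 CA4 CA5

lemma C1: "length xs = n \<Longrightarrow> 1 \<le> i \<Longrightarrow> i \<le> n \<Longrightarrow> q n (e i) xs = xs ! (i - 1)"
  using CAs(1) by blast
lemma C2: "length xs = n \<Longrightarrow> n < j \<Longrightarrow> q n (e j) xs = e j"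
  using CAs(2) by blast
lemma C3: "q n x (es e n) = x"
  using CAs(3) by blast
lemma C4: assumes "length ys = k" "k \<le> n" shows "q k x ys = q n x (ys @ map e [k+1..<n+1])"
proof (cases "k = n")
  case True then show ?thesis by simp
next
  case False
  with assms have "k < n" by simp
  with assms(1) show ?thesis using CAs(4) by blast
qed
lemma C5: "length ys = n \<Longrightarrow> length zs = n \<Longrightarrow>
        q n (q n x ys) zs = q n x (map (\<lambda>y. q n y zs) ys)"
  using CAs(5) by blast

lemma step:
  assumes ind: "independent q e c (Suc n)" and len: "length xs = n"
  shows "q (Suc n) c (xs @ [w]) = q n c xs"
proof -
  define ys where "ys = map e [1..<n+1] @ [e (n+2)]"
  have c: "q (Suc n) c ys = c" using ind unfolding independent_def ys_def by simp
  have gen: "q (Suc n) c (xs @ [w']) = q (Suc n) c (xs @ [e (n+2)])" for w'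
  proof -
    have "map (\<lambda>y. q (Suc n) y (xs @ [w'])) ys = xs @ [e (n+2)]"
    proof -
      have "map (\<lambda>y. q (Suc n) y (xs @ [w'])) (map e [1..<n+1]) = xs"
      proof (rule nth_equalityI)
        fix i assume "i < length (map (\<lambda>y. q (Suc n) y (xs @ [w'])) (map e [1..<n+1]))"
        then have i: "i < n" by (simp del: upt_Suc)
        have "q (Suc n) (e (Suc i)) (xs @ [w']) = (xs @ [w']) ! i"
          using C1[of "xs @ [w']" "Suc n" "Suc i"] len i by simp
        then show "map (\<lambda>y. q (Suc n) y (xs @ [w'])) (map e [1..<n+1]) ! i = xs ! i"
          using i len by (simp add: nth_append)
      qed (use len in \<open>simp del: upt_Suc\<close>)
      moreover have "q (Suc n) (e (n+2)) (xs @ [w']) = e (n+2)"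
        using C2[of "xs @ [w']" "Suc n" "n+2"] len by simp
      ultimately show ?thesis unfolding ys_def by simp
    qed
    then have "q (Suc n) (q (Suc n) c ys) (xs @ [w']) = q (Suc n) c (xs @ [e (n+2)])"
      using C5[of ys "Suc n" "xs @ [w']" c] len unfolding ys_def by simp
    then show ?thesis using c by simp
  qed
  have "q n c xs = q (Suc n) c (xs @ [e (n+1)])"
    using C4[of xs n "Suc n" c] len by (simp add: upt_Suc)
  then show ?thesis using gen[of w] gen[of "e (n+1)"] by simp
qed

lemma dimq:
  assumes "dim_le q e c k" "length zs = k"
  shows "k \<le> n \<Longrightarrow> length ws = n - k \<Longrightarrow> q n c (zs @ ws) = q k c zs"
proof (induction n arbitrary: ws)
  case 0
  then show ?case by simp
next
  case (Suc n)
  show ?case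
  proof (cases "k = Suc n")
    case True
    then show ?thesis using Suc by simp
  next
    case False
    then have kn: "k \<le> n" using Suc by simp
    obtain ws' w where ws: "ws = ws' @ [w]" using Suc(3) kn
      by (metis Suc_diff_le length_0_conv nat.distinct(1) rev_exhaust)
    have l: "length ws' = n - k" using Suc(3) ws kn by simp
    have "independent q e c (Suc n)" using assms(1) kn unfolding dim_le_def by simp
    then have "q (Suc n) c ((zs @ ws') @ [w]) = q n c (zs @ ws')"
      using step[of c n "zs @ ws'" w] l assms(2) kn by simp
    then show ?thesis using Suc.IH[OF kn l] ws by simp
  qed
qed

lemma evalq:
  "wf_trm (rho_syms q e) fst t \<Longrightarrow> bnd t \<le> n \<Longrightarrow>
   eval snd \<rho> t = q n (eval snd (\<lambda>i. e (Suc i)) t) (map \<rho> [0..<n])"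
proof (induction t arbitrary: n)
  case (Var i)
  then show ?case using C1[of "map \<rho> [0..<n]" n "Suc i"] by simp
next
  case (App f ts)
  obtain k g where f: "f = (k, g)" by force
  let ?h = "eval snd (\<lambda>i. e (Suc i))"
  let ?rs = "map \<rho> [0..<n]"
  have rep: "representable q e k g" and lts: "length ts = k"
    and wfs: "\<forall>t\<in>set ts. wf_trm (rho_syms q e) fst t"
    using App.prems f by (auto simp: rho_syms_def)
  have kn: "k \<le> n" using App.prems f by simp
  have bt: "bnd t \<le> n" if "t \<in> set ts" for t
  proof -
    have "bnd t \<le> sum_list (map bnd ts)"
      using that by (simp add: member_le_sum_list)
    then show ?thesis using App.prems by simp
  qed
  define c where "c = g (es e k)"
  have dc: "dim_le q e c k" using rep unfolding representable_def c_def by simp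
  have gr: "g xs = q k c xs" if "length xs = k" for xs
    using rep that unfolding representable_def c_def by simp
  have IH: "map (eval snd \<rho>) ts = map (\<lambda>t. q n (?h t) ?rs) ts"
    using App.IH wfs bt by simp
  have "eval snd \<rho> (App f ts) = q k c (map (eval snd \<rho>) ts)"
    using f gr lts by simp
  also have "\<dots> = q k c (map (\<lambda>t. q n (?h t) ?rs) ts)"
    by (simp only: IH)
  also have "\<dots> = q n c (map (\<lambda>t. q n (?h t) ?rs) ts @ map (\<lambda>j. q n (e j) ?rs) [k+1..<n+1])"
    using dimq[OF dc, of "map (\<lambda>t. q n (?h t) ?rs) ts" n] lts kn by simp
  also have "\<dots> = q n c (map (\<lambda>y. q n y ?rs) (map ?h ts @ map e [k+1..<n+1]))"
    by (simp add: comp_def)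
  also have "\<dots> = q n (q n c (map ?h ts @ map e [k+1..<n+1])) ?rs"
    using C5[of "map ?h ts @ map e [k+1..<n+1]" n ?rs c] lts kn by simp
  also have "\<dots> = q n (q k c (map ?h ts)) ?rs"
    using C4[of "map ?h ts" k n c] lts kn by simp
  also have "\<dots> = q n (?h (App f ts)) ?rs"
    using f gr lts by simp
  finally show ?case .
qed

end

theorem theorem10p5:
  fixes ar :: "'s \<Rightarrow> nat" and sig :: "'s \<Rightarrow> 'a list \<Rightarrow> 'a"
    and q :: "nat \<Rightarrow> 'a \<Rightarrow> 'a list \<Rightarrow> 'a" and e :: "nat \<Rightarrow> 'a"
  assumes "clone_alg ar sig q e"
    and "finite_dim q e"
  shows "(\<exists>h. free_iso q e h) \<and> (\<exists>h. free_iso q e h \<and> clone_iso q e h)"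
proof -
  define h :: "(nat \<times> ('a list \<Rightarrow> 'a)) trm \<Rightarrow> 'a" where "h = eval snd (\<lambda>i. e (Suc i))"
  note CA = assms(1)
  have surj: "h ` rho_terms q e = UNIV"
  proof (intro set_eqI iffI)
    fix a :: 'a
    assume "a \<in> UNIV"
    obtain k where dk: "dim_le q e a k" using assms(2) unfolding finite_dim_def by blast
    define g where "g = (\<lambda>xs. if length xs = k then q k a xs else undefined)"
    have ga: "g (es e k) = a" using C3[OF CA] unfolding g_def by (simp add: es_def)
    have rep: "representable q e k g"
      unfolding representable_def using ga dk by (simp add: g_def)
    have wf: "App (k, g) (map Var [0..<k]) \<in> rho_terms q e"
      using rep by (auto simp: rho_terms_def rho_syms_def)
    have "map (\<lambda>i. e (Suc i)) [0..<k] = es e k"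
      unfolding es_def by (simp add: map_Suc_upt[symmetric])
    then have "h (App (k, g) (map Var [0..<k])) = a"
      using ga unfolding h_def by (simp add: comp_def)
    then show "a \<in> h ` rho_terms q e" using wf by force
  qed simp
  have ker: "\<forall>s\<in>rho_terms q e. \<forall>t\<in>rho_terms q e. h s = h t \<longleftrightarrow> R_identity s t"
  proof (intro ballI iffI)
    fix s t :: "(nat \<times> ('a list \<Rightarrow> 'a)) trm" assume s: "s \<in> rho_terms q e" and t: "t \<in> rho_terms q e" and st: "h s = h t"
    show "R_identity s t" unfolding R_identity_def
    proof
      fix \<rho> :: "nat \<Rightarrow> 'a"
      let ?n = "max (bnd s) (bnd t)"
      show "eval snd \<rho> s = eval snd \<rho> t"
        using evalq[OF CA, of s ?n \<rho>] evalq[OF CA, of t ?n \<rho>] s t st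
        unfolding rho_terms_def h_def by simp
    qed
  next
    fix s t :: "(nat \<times> ('a list \<Rightarrow> 'a)) trm" assume "R_identity s t"
    then show "h s = h t" unfolding R_identity_def h_def by blast
  qed
  have hom: "\<forall>k f ts. (k, f) \<in> rho_syms q e \<longrightarrow> length ts = k \<longrightarrow> set ts \<subseteq> rho_terms q e \<longrightarrow>
        h (App (k, f) ts) = f (map h ts)"
    unfolding h_def by simp
  have fi: "free_iso q e h" unfolding free_iso_def using surj ker hom by blast
  have ci: "clone_iso q e h" unfolding clone_iso_def
  proof (intro conjI allI impI)
    fix i :: nat assume "1 \<le> i" then show "h (Var (i - 1)) = e i" unfolding h_def by simp
  next
    fix n :: nat and t :: "(nat \<times> ('a list \<Rightarrow> 'a)) trm" and bs :: "(nat \<times> ('a list \<Rightarrow> 'a)) trm list"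
    assume t: "t \<in> rho_terms q e" and lb: "length bs = n" and "set bs \<subseteq> rho_terms q e"
    define m where "m = max (bnd t) n"
    have "h (subst (sub_n bs) t) = eval snd (\<lambda>i. h (sub_n bs i)) t"
      unfolding h_def by (simp add: subst_eval)
    also have "\<dots> = q m (h t) (map (\<lambda>i. h (sub_n bs i)) [0..<m])"
      using evalq[OF CA, of t m "\<lambda>i. h (sub_n bs i)"] t unfolding rho_terms_def h_def m_def by simp
    also have "map (\<lambda>i. h (sub_n bs i)) [0..<m] = map h bs @ map e [n+1..<m+1]"
    proof -
      have u: "[0..<m] = [0..<n] @ [n..<m]"
        using upt_add_eq_append[of 0 n "m - n"] by (simp add: m_def)
      have a: "map (\<lambda>i. h (sub_n bs i)) [0..<n] = map h bs"
        by (rule nth_equalityI) (auto simp: lb sub_n_def)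
      have b: "map (\<lambda>i. h (sub_n bs i)) [n..<m] = map e [n+1..<m+1]"
      proof -
        have "map (\<lambda>i. h (sub_n bs i)) [n..<m] = map (\<lambda>i. e (Suc i)) [n..<m]"
          by (rule map_cong) (auto simp: lb sub_n_def h_def)
        also have "\<dots> = map e (map Suc [n..<m])" by simp
        finally show ?thesis by (simp add: map_Suc_upt)
      qed
      show ?thesis using u a b by simp
    qed
    also have "q m (h t) (map h bs @ map e [n+1..<m+1]) = q n (h t) (map h bs)"
      using C4[OF CA, of "map h bs" n m "h t"] lb unfolding m_def by simp
    finally show "h (subst (sub_n bs) t) = q n (h t) (map h bs)" .
  qed
  show ?thesis using fi ci by blast
qed

end
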